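(* Let $\alpha\neq0$ and $b<0$. Then the set $\mathcal C=\bigcup_{u\in B}r_u$ is the unique control set of the system $\dot x=u\alpha x$, $\dot y=by+ux$ on $G$. Moreover, $\mathcal C=\operatorname{cl}\mathcal O^+(p)$ for every $p\in\mathcal C$.
   Context: Let $G=\{(x,y)\in\mathbb{R}^2:x>0\}$. Fix $\Omega=[u_*,u^*]$ with $u_*<0<u^*$. The admissible controls $\mathcal U$ are the piecewise constant functions $\mathbb{R}\to\Omega$. We write $\varphi(t,p,u)$ for the solutions and $\mathcal O^+(p)=\{\varphi(t,p,u):t\ge0,u\in\mathcal U\}$; closures are taken in $G$. For $u\in\mathbb{R}$ with $u\alpha\neq b$, set $m_u=\frac{u}{u\alpha-b}$ and $r_u=\{(x,y)\in G:y=m_ux\}$. Let $B=\{u\in\Omega:u\alpha-b>0\}$. A control set is a subset $\mathcal C\subset G$ that is maximal with respect to inclusion among the sets satisfying both of the following: (i) every $p\in\mathcal C$ admits $u\in\mathcal U$ with $\varphi(t,p,u)\in\mathcal C$ for all $t\ge0$; (ii) $\mathcal C\subset\operatorname{cl}\mathcal O^+(p)$ for all $p\in\mathcal C$. (This system is the image of $\Sigma$ with $\alpha(a\alpha+b\beta)\neq0$, $b<0$ under the map $(x,y)\mapsto(x,\gamma^{-1}(a(x-1)+by))$, where $\gamma=a\alpha+b\beta$.) *)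

theory Defs
  imports "HOL-Analysis.Analysis"
begin

type_synonym pt = "real \<times> real"

definition G :: "pt set" where
  "G = {p. fst p > 0}"

definition vf :: "real \<Rightarrow> real \<Rightarrow> real \<Rightarrow> pt \<Rightarrow> pt" where
  "vf \<alpha> b u p = (u * \<alpha> * fst p, b * snd p + u * fst p)"

definition loc_const :: "(real \<Rightarrow> real) \<Rightarrow> real \<Rightarrow> bool" where
  "loc_const u t \<longleftrightarrow> (\<exists>e>0. \<forall>s. \<bar>s - t\<bar> < e \<longrightarrow> u s = u t)"

text \<open>Admissible controls: piecewise constant functions R -> Omega = [umin, umax]
  (on every compact interval, locally constant off a finite set).\<close>
definition admissible :: "real \<Rightarrow> real \<Rightarrow> (real \<Rightarrow> real) \<Rightarrow> bool" where
  "admissible umin umax u \<longleftrightarrow>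
     (\<forall>t. u t \<in> {umin..umax}) \<and>
     (\<forall>a c. \<exists>S. finite S \<and> (\<forall>t\<in>{a..c} - S. loc_const u t))"

definition is_sol :: "real \<Rightarrow> real \<Rightarrow> pt \<Rightarrow> (real \<Rightarrow> real) \<Rightarrow> (real \<Rightarrow> pt) \<Rightarrow> bool" where
  "is_sol \<alpha> b p u gam \<longleftrightarrow> gam 0 = p \<and> continuous_on UNIV gam \<and>
     (\<forall>t. loc_const u t \<longrightarrow> (gam has_vector_derivative vf \<alpha> b (u t) (gam t)) (at t))"

definition phi :: "real \<Rightarrow> real \<Rightarrow> real \<Rightarrow> pt \<Rightarrow> (real \<Rightarrow> real) \<Rightarrow> pt" where
  "phi \<alpha> b t p u = (THE gam. is_sol \<alpha> b p u gam) t"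

definition orbit_plus :: "real \<Rightarrow> real \<Rightarrow> real \<Rightarrow> real \<Rightarrow> pt \<Rightarrow> pt set" where
  "orbit_plus \<alpha> b umin umax p =
     {phi \<alpha> b t p u | t u. t \<ge> 0 \<and> admissible umin umax u}"

text \<open>Closure taken in G (subspace topology).\<close>
definition clG :: "pt set \<Rightarrow> pt set" where
  "clG A = closure A \<inter> G"

definition cs_prop :: "real \<Rightarrow> real \<Rightarrow> real \<Rightarrow> real \<Rightarrow> pt set \<Rightarrow> bool" where
  "cs_prop \<alpha> b umin umax C \<longleftrightarrow> C \<subseteq> G \<and>
     (\<forall>p\<in>C. \<exists>u. admissible umin umax u \<and> (\<forall>t\<ge>0. phi \<alpha> b t p u \<in> C)) \<and>
     (\<forall>p\<in>C. C \<subseteq> clG (orbit_plus \<alpha> b umin umax p))"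

definition control_set :: "real \<Rightarrow> real \<Rightarrow> real \<Rightarrow> real \<Rightarrow> pt set \<Rightarrow> bool" where
  "control_set \<alpha> b umin umax C \<longleftrightarrow> cs_prop \<alpha> b umin umax C \<and>
     (\<forall>D. cs_prop \<alpha> b umin umax D \<and> C \<subseteq> D \<longrightarrow> D = C)"

definition m_slope :: "real \<Rightarrow> real \<Rightarrow> real \<Rightarrow> real" where
  "m_slope \<alpha> b u = u / (u * \<alpha> - b)"

definition ray :: "real \<Rightarrow> real \<Rightarrow> real \<Rightarrow> pt set" where
  "ray \<alpha> b u = {p \<in> G. snd p = m_slope \<alpha> b u * fst p}"

definition Bset :: "real \<Rightarrow> real \<Rightarrow> real \<Rightarrow> real \<Rightarrow> real set" where
  "Bset \<alpha> b umin umax = {u \<in> {umin..umax}. u * \<alpha> - b > 0}"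

end

theory Submission
  imports Defs
begin



definition badset :: "(real \<Rightarrow> real) \<Rightarrow> real set" where
  "badset u = {t. \<not> loc_const u t}"

lemma loc_const_eventually: "loc_const u t \<Longrightarrow> eventually (\<lambda>s. u s = u t) (nhds t)"
  unfolding loc_const_def eventually_nhds_metric dist_real_def by auto

lemma loc_const_isCont: "loc_const u t \<Longrightarrow> isCont u t"
  unfolding isCont_def
  by (rule tendsto_eventually) (auto simp: eventually_at_filter elim!: eventually_mono dest!: loc_const_eventually)

lemma admissible_finite: "admissible umin umax u \<Longrightarrow> finite (badset u \<inter> {a..c})"
proof -
  assume "admissible umin umax u"
  then obtain S where "finite S" "\<forall>t\<in>{a..c} - S. loc_const u t" unfolding admissible_def by blast
  then have "badset u \<inter> {a..c} \<subseteq> S" unfolding badset_def by auto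
  then show ?thesis using \<open>finite S\<close> finite_subset by blast
qed

lemma integrable_pc:
  fixes f g :: "real \<Rightarrow> real"
  assumes "finite F" "\<And>t. t \<in> {a..c} - F \<Longrightarrow> isCont f t" "continuous_on {a..c} g"
    "\<And>t. t\<in>{a..c} \<Longrightarrow> \<bar>f t\<bar> \<le> g t"
  shows "f integrable_on {a..c}"
proof -
  let ?S = "{a..c} - F"
  have neg: "negligible (({a..c} - ?S) \<union> (?S - {a..c}))"
    using assms(1) by (auto intro: negligible_subset[of F])
  have Sl: "?S \<in> sets lebesgue"
    using assms(1) by (intro sets.Diff) (auto intro: negligible_imp_sets negligible_finite)
  have "continuous_on ?S f" using assms(2) by (simp add: continuous_at_imp_continuous_on)
  then have m: "f \<in> borel_measurable (lebesgue_on ?S)"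
    using Sl continuous_imp_measurable_on_sets_lebesgue by blast
  have "g integrable_on {a..c}" using assms(3) integrable_continuous_interval by blast
  then have "g integrable_on ?S" using integrable_spike_set_eq[OF neg] by blast
  then have "f integrable_on ?S"
    by (rule measurable_bounded_by_integrable_imp_integrable[OF m]) (use assms(4) Sl in auto)
  then show ?thesis using integrable_spike_set_eq[OF neg] by blast
qed

definition prim :: "(real \<Rightarrow> real) \<Rightarrow> real \<Rightarrow> real" where
  "prim f t = integral {0..t} f - integral {t..0} f"

lemma prim_eq:
  assumes "\<And>a c. f integrable_on {a..c}" "a \<le> t" "a \<le> 0"
  shows "prim f t = integral {a..t} f - integral {a..0} f"
proof (cases "0 \<le> t")
  case True
  have "integral {a..0} f + integral {0..t} f = integral {a..t} f"
    using Henstock_Kurzweil_Integration.integral_combine[OF assms(3) True assms(1)] .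
  moreover have "integral {t..0} f = 0"
    using True by (cases "t = 0") auto
  ultimately show ?thesis unfolding prim_def by simp
next
  case False
  have "integral {a..t} f + integral {t..0} f = integral {a..0} f"
    using Henstock_Kurzweil_Integration.integral_combine[OF assms(2) _ assms(1)] False by simp
  moreover have "integral {0..t} f = 0" using False by simp
  ultimately show ?thesis unfolding prim_def by simp
qed

lemma prim_0[simp]: "prim f 0 = 0"
  unfolding prim_def by simp

lemma prim_deriv:
  assumes "\<And>a c. f integrable_on {a..c}" "isCont f t"
  shows "(prim f has_real_derivative f t) (at t)"
proof -
  define a where "a = min t 0 - 1"
  define c where "c = max t 0 + 1"
  have tin: "t \<in> {a<..<c}" unfolding a_def c_def by auto
  have "((\<lambda>s. integral {a..s} f) has_vector_derivative f t) (at t within ({a..c} - {}))"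
    by (rule integral_has_vector_derivative_continuous_at[OF assms(1)])
       (use tin assms(2) in \<open>auto intro: continuous_at_imp_continuous_within\<close>)
  moreover have "at t within ({a..c} - {}) = at t"
    using tin by (intro at_within_interior) (auto simp: interior_atLeastAtMost_real)
  ultimately have "((\<lambda>s. integral {a..s} f) has_vector_derivative f t) (at t)" by simp
  then have "((\<lambda>s. integral {a..s} f - integral {a..0} f) has_vector_derivative f t - 0) (at t)"
    by (intro derivative_intros) auto
  then have "((\<lambda>s. integral {a..s} f - integral {a..0} f) has_vector_derivative f t) (at t)"
    by simp
  then have "(prim f has_vector_derivative f t) (at t)"
    by (rule has_vector_derivative_transform_within_open[where S="{a<..<c}"])
       (use tin in \<open>auto simp: a_def c_def intro!: prim_eq[symmetric] assms(1)\<close>)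
  then show ?thesis by (simp add: has_real_derivative_iff_has_vector_derivative)
qed

lemma prim_cont:
  assumes "\<And>a c. f integrable_on {a..c}"
  shows "isCont (prim f) t"
proof -
  define a where "a = min t 0 - 1"
  define c where "c = max t 0 + 1"
  have tin: "t \<in> {a<..<c}" unfolding a_def c_def by auto
  have "continuous_on {a..c} (\<lambda>s. integral {a..s} f - integral {a..0} f)"
    by (intro continuous_intros indefinite_integral_continuous_1 assms)
  then have "continuous_on {a..c} (prim f)"
    by (rule continuous_on_cong[THEN iffD1, rotated 2]) (auto simp: a_def c_def intro!: prim_eq[symmetric] assms)
  then show ?thesis using tin by (intro continuous_on_interior) (auto simp: interior_atLeastAtMost_real)
qed




lemma admissible_bound: "admissible umin umax u \<Longrightarrow> \<bar>u t\<bar> \<le> max \<bar>umin\<bar> \<bar>umax\<bar>"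
proof -
  assume "admissible umin umax u"
  then have "u t \<in> {umin..umax}" unfolding admissible_def by blast
  then show ?thesis by (auto simp: abs_if max_def)
qed

lemma admissible_isCont: "admissible umin umax u \<Longrightarrow> t \<in> {a..c} - (badset u \<inter> {a..c}) \<Longrightarrow> loc_const u t"
  unfolding badset_def by auto

lemma admissible_integrable:
  assumes "admissible umin umax u"
  shows "u integrable_on {a..c}"
  by (rule integrable_pc[OF admissible_finite[OF assms], where g="\<lambda>_. max \<bar>umin\<bar> \<bar>umax\<bar>"])
     (auto simp: badset_def intro: loc_const_isCont admissible_bound[OF assms])

definition solX :: "real \<Rightarrow> (real \<Rightarrow> real) \<Rightarrow> pt \<Rightarrow> real \<Rightarrow> real" where
  "solX \<alpha> u p t = fst p * exp (\<alpha> * prim u t)"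

definition solW :: "real \<Rightarrow> real \<Rightarrow> (real \<Rightarrow> real) \<Rightarrow> pt \<Rightarrow> real \<Rightarrow> real" where
  "solW \<alpha> b u p = prim (\<lambda>s. exp (- b * s) * u s * solX \<alpha> u p s)"

definition solg :: "real \<Rightarrow> real \<Rightarrow> (real \<Rightarrow> real) \<Rightarrow> pt \<Rightarrow> real \<Rightarrow> pt" where
  "solg \<alpha> b u p t = (solX \<alpha> u p t, exp (b * t) * (snd p + solW \<alpha> b u p t))"

lemma solX_cont: "admissible umin umax u \<Longrightarrow> isCont (solX \<alpha> u p) t"
  unfolding solX_def by (intro continuous_intros prim_cont admissible_integrable) auto

lemma v_integrable:
  assumes "admissible umin umax u"
  shows "(\<lambda>s. exp (- b * s) * u s * solX \<alpha> u p s) integrable_on {a..c}"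
proof (rule integrable_pc[OF admissible_finite[OF assms],
      where g="\<lambda>s. exp (- b * s) * max \<bar>umin\<bar> \<bar>umax\<bar> * \<bar>solX \<alpha> u p s\<bar>"])
  fix t assume "t \<in> {a..c} - badset u \<inter> {a..c}"
  then have "isCont u t" using admissible_isCont[OF assms] loc_const_isCont by blast
  then show "isCont (\<lambda>s. exp (- b * s) * u s * solX \<alpha> u p s) t"
    by (intro continuous_intros solX_cont[OF assms])
next
  show "continuous_on {a..c} (\<lambda>s. exp (- b * s) * max \<bar>umin\<bar> \<bar>umax\<bar> * \<bar>solX \<alpha> u p s\<bar>)"
    by (intro continuous_at_imp_continuous_on ballI continuous_intros solX_cont[OF assms])
next
  fix t
  show "\<bar>exp (- b * t) * u t * solX \<alpha> u p t\<bar> \<le> exp (- b * t) * max \<bar>umin\<bar> \<bar>umax\<bar> * \<bar>solX \<alpha> u p t\<bar>"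
    using admissible_bound[OF assms, of t]
    by (auto simp: abs_mult intro!: mult_right_mono)
qed

lemma solg_deriv:
  assumes "admissible umin umax u" "loc_const u t"
  shows "(solg \<alpha> b u p has_vector_derivative vf \<alpha> b (u t) (solg \<alpha> b u p t)) (at t)"
proof -
  have ct: "isCont u t" using assms(2) loc_const_isCont by blast
  have dU: "(prim u has_real_derivative u t) (at t)"
    by (rule prim_deriv[OF admissible_integrable[OF assms(1)] ct])
  have dX: "(solX \<alpha> u p has_real_derivative u t * \<alpha> * solX \<alpha> u p t) (at t)"
    unfolding solX_def by (auto intro!: derivative_eq_intros dU)
  have dW: "(solW \<alpha> b u p has_real_derivative exp (- b * t) * u t * solX \<alpha> u p t) (at t)"
    unfolding solW_def
    by (rule prim_deriv[OF v_integrable[OF assms(1)]]) (intro continuous_intros ct solX_cont[OF assms(1)])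
  have dY: "((\<lambda>t. exp (b * t) * (snd p + solW \<alpha> b u p t)) has_real_derivative
     b * (exp (b * t) * (snd p + solW \<alpha> b u p t)) + u t * solX \<alpha> u p t) (at t)"
    by (auto intro!: derivative_eq_intros dW simp: algebra_simps exp_minus field_simps)
  show ?thesis
    unfolding solg_def[abs_def] vf_def using dX dY
    by (auto simp: has_real_derivative_iff_has_vector_derivative intro!: has_vector_derivative_Pair)
qed

lemma solg_is_sol:
  assumes "admissible umin umax u"
  shows "is_sol \<alpha> b p u (solg \<alpha> b u p)"
  unfolding is_sol_def
proof (intro conjI allI impI)
  show "solg \<alpha> b u p 0 = p" by (simp add: solg_def solX_def solW_def)
  show "continuous_on UNIV (solg \<alpha> b u p)"
    unfolding solg_def[abs_def] solW_def
    by (intro continuous_at_imp_continuous_on ballI continuous_intros solX_cont[OF assms]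
        prim_cont v_integrable[OF assms, unfolded solW_def])
  show "loc_const u t \<Longrightarrow> (solg \<alpha> b u p has_vector_derivative vf \<alpha> b (u t) (solg \<alpha> b u p t)) (at t)" for t
    using solg_deriv[OF assms] by blast
qed




lemma mono_fin:
  fixes f f' :: "real \<Rightarrow> real"
  assumes "a \<le> c" "finite F" "continuous_on {a..c} f"
    "\<And>t. t \<in> {a<..<c} - F \<Longrightarrow> (f has_real_derivative f' t) (at t)"
    "\<And>t. t \<in> {a<..<c} - F \<Longrightarrow> f' t \<ge> 0"
  shows "f a \<le> f c"
proof -
  define g where "g t = (if t \<in> {a<..<c} - F then f' t else 0)" for t
  have "(g has_integral (f c - f a)) {a..c}"
    by (rule fundamental_theorem_of_calculus_interior_strong[OF assms(2,1) _ assms(3)])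
       (use assms(4) in \<open>auto simp: g_def has_real_derivative_iff_has_vector_derivative\<close>)
  moreover have "\<And>t. 0 \<le> g t" using assms(5) by (auto simp: g_def)
  ultimately have "0 \<le> f c - f a" using has_integral_nonneg by blast
  then show ?thesis by simp
qed

lemma has_vd_fst: "(g has_vector_derivative v) (at t) \<Longrightarrow> ((\<lambda>s. fst (g s)) has_real_derivative fst v) (at t)"
proof -
  assume "(g has_vector_derivative v) (at t)"
  then have "((\<lambda>s. fst (g s)) has_derivative (\<lambda>x. x * fst v)) (at t)"
    unfolding has_vector_derivative_def using has_derivative_fst by fastforce
  moreover have "(\<lambda>x. x * fst v) = (*) (fst v)" by (auto simp: fun_eq_iff)
  ultimately show ?thesis unfolding has_field_derivative_def by simp
qed

lemma has_vd_snd: "(g has_vector_derivative v) (at t) \<Longrightarrow> ((\<lambda>s. snd (g s)) has_real_derivative snd v) (at t)"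
proof -
  assume "(g has_vector_derivative v) (at t)"
  then have "((\<lambda>s. snd (g s)) has_derivative (\<lambda>x. x * snd v)) (at t)"
    unfolding has_vector_derivative_def using has_derivative_snd by fastforce
  moreover have "(\<lambda>x. x * snd v) = (*) (snd v)" by (auto simp: fun_eq_iff)
  ultimately show ?thesis unfolding has_field_derivative_def by simp
qed

lemma sq_deriv: "(f has_real_derivative D) (at t) \<Longrightarrow> ((\<lambda>x. (f x)\<^sup>2) has_real_derivative 2 * f t * D) (at t)"
proof -
  assume d: "(f has_real_derivative D) (at t)"
  show ?thesis using DERIV_mult[OF d d] by (simp add: power2_eq_square algebra_simps)
qed

lemma energy_zero:
  fixes E E' :: "real \<Rightarrow> real"
  assumes "continuous_on UNIV E" "E 0 = 0" "\<And>t. E t \<ge> 0" "\<And>a c. finite (Bad \<inter> {a..c})"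
    "\<And>t. t \<notin> Bad \<Longrightarrow> (E has_real_derivative E' t) (at t)"
    "\<And>t. t \<notin> Bad \<Longrightarrow> \<bar>E' t\<bar> \<le> K * E t"
  shows "E t = 0"
proof (cases "0 \<le> t")
  case True
  let ?h = "\<lambda>s. - (exp (- K * s) * E s)"
  have "?h 0 \<le> ?h t"
  proof (rule mono_fin[OF True, of "Bad \<inter> {0..t}" _ "\<lambda>s. exp (- K * s) * (K * E s - E' s)"])
    show "continuous_on {0..t} ?h"
      by (intro continuous_intros continuous_on_subset[OF assms(1)]) auto
    fix s assume s: "s \<in> {0<..<t} - Bad \<inter> {0..t}"
    then have "s \<notin> Bad" by auto
    then show "(?h has_real_derivative exp (- K * s) * (K * E s - E' s)) (at s)"
      by (auto intro!: derivative_eq_intros assms(5) simp: algebra_simps)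
    show "0 \<le> exp (- K * s) * (K * E s - E' s)"
      using assms(6)[OF \<open>s \<notin> Bad\<close>] by (intro mult_nonneg_nonneg) auto
  qed (use assms(4) in auto)
  then have "exp (- K * t) * E t \<le> 0" using assms(2) by simp
  then have "E t \<le> 0" by (simp add: mult_le_0_iff)
  then show ?thesis using assms(3)[of t] by simp
next
  case False
  then have le: "t \<le> 0" by simp
  let ?h = "\<lambda>s. exp (K * s) * E s"
  have "?h t \<le> ?h 0"
  proof (rule mono_fin[OF le, of "Bad \<inter> {t..0}" _ "\<lambda>s. exp (K * s) * (K * E s + E' s)"])
    show "continuous_on {t..0} ?h"
      by (intro continuous_intros continuous_on_subset[OF assms(1)]) auto
    fix s assume s: "s \<in> {t<..<0} - Bad \<inter> {t..0}"
    then have "s \<notin> Bad" by auto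
    then show "(?h has_real_derivative exp (K * s) * (K * E s + E' s)) (at s)"
      by (auto intro!: derivative_eq_intros assms(5) simp: algebra_simps)
    show "0 \<le> exp (K * s) * (K * E s + E' s)"
      using assms(6)[OF \<open>s \<notin> Bad\<close>] by (intro mult_nonneg_nonneg) auto
  qed (use assms(4) in auto)
  then have "exp (K * t) * E t \<le> 0" using assms(2) by simp
  then have "E t \<le> 0" by (simp add: mult_le_0_iff)
  then show ?thesis using assms(3)[of t] by simp
qed

lemma quad_bound:
  fixes w1 w2 v \<alpha> b R :: real
  assumes "\<bar>v\<bar> \<le> R"
  shows "\<bar>2 * (v * \<alpha> * w1 * w1 + (b * w2 + v * w1) * w2)\<bar> \<le> (2 * R * \<bar>\<alpha>\<bar> + 2 * \<bar>b\<bar> + 2 * R) * (w1\<^sup>2 + w2\<^sup>2)"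
proof -
  have R0: "0 \<le> R" using assms by linarith
  have a: "\<bar>v * \<alpha> * w1 * w1\<bar> \<le> R * \<bar>\<alpha>\<bar> * w1\<^sup>2"
  proof -
    have "\<bar>v\<bar> * (\<bar>\<alpha>\<bar> * (w1 * w1)) \<le> R * (\<bar>\<alpha>\<bar> * (w1 * w1))"
      using assms by (intro mult_right_mono) auto
    then show ?thesis by (simp add: abs_mult power2_eq_square mult.assoc)
  qed
  have b: "\<bar>b * w2 * w2\<bar> \<le> \<bar>b\<bar> * w2\<^sup>2" by (simp add: abs_mult power2_eq_square)
  have "2 * \<bar>w1 * w2\<bar> \<le> w1\<^sup>2 + w2\<^sup>2"
    using sum_squares_bound[of "\<bar>w1\<bar>" "\<bar>w2\<bar>"] by (simp add: abs_mult)
  then have c: "2 * \<bar>v * w1 * w2\<bar> \<le> R * (w1\<^sup>2 + w2\<^sup>2)"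
  proof -
    have "\<bar>v\<bar> * (2 * \<bar>w1 * w2\<bar>) \<le> R * (w1\<^sup>2 + w2\<^sup>2)"
      using assms R0 \<open>2 * \<bar>w1 * w2\<bar> \<le> w1\<^sup>2 + w2\<^sup>2\<close> by (intro mult_mono) auto
    then show ?thesis by (simp add: abs_mult algebra_simps)
  qed
  have "\<bar>2 * (v * \<alpha> * w1 * w1 + (b * w2 + v * w1) * w2)\<bar>
     \<le> 2 * \<bar>v * \<alpha> * w1 * w1\<bar> + 2 * \<bar>b * w2 * w2\<bar> + 2 * \<bar>v * w1 * w2\<bar>"
    by (simp add: algebra_simps)
  also have "\<dots> \<le> 2 * (R * \<bar>\<alpha>\<bar> * w1\<^sup>2) + 2 * (\<bar>b\<bar> * w2\<^sup>2) + R * (w1\<^sup>2 + w2\<^sup>2)"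
    using a b c by linarith
  also have "\<dots> \<le> (2 * R * \<bar>\<alpha>\<bar> + 2 * \<bar>b\<bar> + 2 * R) * (w1\<^sup>2 + w2\<^sup>2)"
    using R0 by (simp add: algebra_simps add_mono mult_nonneg_nonneg)
  finally show ?thesis .
qed

lemma sol_unique_gen:
  fixes g1 g2 :: "real \<Rightarrow> pt" and v :: "real \<Rightarrow> real"
  assumes "continuous_on UNIV g1" "continuous_on UNIV g2" "g1 0 = g2 0"
    "\<And>a c. finite (Bad \<inter> {a..c})" "\<And>t. \<bar>v t\<bar> \<le> R"
    "\<And>t. t \<notin> Bad \<Longrightarrow> (g1 has_vector_derivative vf \<alpha> b (v t) (g1 t)) (at t)"
    "\<And>t. t \<notin> Bad \<Longrightarrow> (g2 has_vector_derivative vf \<alpha> b (v t) (g2 t)) (at t)"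
  shows "g1 t = g2 t"
proof -
  define E where "E s = (fst (g1 s) - fst (g2 s))\<^sup>2 + (snd (g1 s) - snd (g2 s))\<^sup>2" for s
  define E' where "E' s = 2 * (v s * \<alpha> * (fst (g1 s) - fst (g2 s)) * (fst (g1 s) - fst (g2 s))
      + (b * (snd (g1 s) - snd (g2 s)) + v s * (fst (g1 s) - fst (g2 s))) * (snd (g1 s) - snd (g2 s)))" for s
  have "E t = 0"
  proof (rule energy_zero[where Bad=Bad and E=E and E'=E' and K="2 * R * \<bar>\<alpha>\<bar> + 2 * \<bar>b\<bar> + 2 * R"])
    show "continuous_on UNIV E" unfolding E_def
      by (intro continuous_intros assms(1,2))
    show "E 0 = 0" using assms(3) by (simp add: E_def)
    show "0 \<le> E s" for s by (simp add: E_def)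
    show "finite (Bad \<inter> {a..c})" for a c by (rule assms(4))
    fix s assume s: "s \<notin> Bad"
    note d1 = assms(6)[OF s] and d2 = assms(7)[OF s]
    have f1: "((\<lambda>s. fst (g1 s)) has_real_derivative v s * \<alpha> * fst (g1 s)) (at s)"
      using has_vd_fst[OF d1] by (simp add: vf_def)
    have f2: "((\<lambda>s. fst (g2 s)) has_real_derivative v s * \<alpha> * fst (g2 s)) (at s)"
      using has_vd_fst[OF d2] by (simp add: vf_def)
    have s1: "((\<lambda>s. snd (g1 s)) has_real_derivative b * snd (g1 s) + v s * fst (g1 s)) (at s)"
      using has_vd_snd[OF d1] by (simp add: vf_def)
    have s2: "((\<lambda>s. snd (g2 s)) has_real_derivative b * snd (g2 s) + v s * fst (g2 s)) (at s)"
      using has_vd_snd[OF d2] by (simp add: vf_def)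
    have "((\<lambda>s. (fst (g1 s) - fst (g2 s))\<^sup>2 + (snd (g1 s) - snd (g2 s))\<^sup>2) has_real_derivative
       2 * (fst (g1 s) - fst (g2 s)) * (v s * \<alpha> * fst (g1 s) - v s * \<alpha> * fst (g2 s))
     + 2 * (snd (g1 s) - snd (g2 s)) * ((b * snd (g1 s) + v s * fst (g1 s)) - (b * snd (g2 s) + v s * fst (g2 s)))) (at s)"
      by (intro DERIV_add sq_deriv DERIV_diff f1 f2 s1 s2)
    then show "(E has_real_derivative E' s) (at s)"
      unfolding E_def[abs_def] E'_def by (simp add: algebra_simps)
    show "\<bar>E' s\<bar> \<le> (2 * R * \<bar>\<alpha>\<bar> + 2 * \<bar>b\<bar> + 2 * R) * E s"
      unfolding E'_def E_def by (rule quad_bound[OF assms(5)])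
  qed
  then show ?thesis unfolding E_def by (simp add: prod_eq_iff add_nonneg_eq_0_iff)
qed




lemma locfin_Un: "(\<And>a c. finite (A \<inter> {a..c})) \<Longrightarrow> (\<And>a c. finite (B \<inter> {a..c})) \<Longrightarrow> finite ((A \<union> B) \<inter> {a..c})"
  by (simp add: Int_Un_distrib2)

lemma phi_eq_gen:
  fixes g :: "real \<Rightarrow> pt"
  assumes adm: "admissible umin umax u" and "continuous_on UNIV g" "g 0 = p"
    "\<And>a c. finite (Bad \<inter> {a..c})"
    "\<And>t. t \<notin> Bad \<Longrightarrow> (g has_vector_derivative vf \<alpha> b (u t) (g t)) (at t)"
  shows "solg \<alpha> b u p t = g t"
proof (rule sol_unique_gen[where Bad="Bad \<union> badset u" and v=u and R="max \<bar>umin\<bar> \<bar>umax\<bar>" and \<alpha>=\<alpha> and b=b])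
  have s: "is_sol \<alpha> b p u (solg \<alpha> b u p)" by (rule solg_is_sol[OF adm])
  show "continuous_on UNIV (solg \<alpha> b u p)" using s unfolding is_sol_def by blast
  show "continuous_on UNIV g" by fact
  show "solg \<alpha> b u p 0 = g 0" using s assms(3) unfolding is_sol_def by simp
  show "finite ((Bad \<union> badset u) \<inter> {a..c})" for a c
    by (rule locfin_Un[OF assms(4) admissible_finite[OF adm]])
  show "\<bar>u t\<bar> \<le> max \<bar>umin\<bar> \<bar>umax\<bar>" for t by (rule admissible_bound[OF adm])
  fix t assume t: "t \<notin> Bad \<union> badset u"
  then show "(solg \<alpha> b u p has_vector_derivative vf \<alpha> b (u t) (solg \<alpha> b u p t)) (at t)"
    using s unfolding is_sol_def badset_def by blast
  show "(g has_vector_derivative vf \<alpha> b (u t) (g t)) (at t)" using t assms(5) by blast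
qed

lemma phi_eq:
  assumes adm: "admissible umin umax u"
  shows "phi \<alpha> b t p u = solg \<alpha> b u p t"
proof -
  have "(THE gam. is_sol \<alpha> b p u gam) = solg \<alpha> b u p"
  proof (rule the_equality)
    show "is_sol \<alpha> b p u (solg \<alpha> b u p)" by (rule solg_is_sol[OF adm])
    fix gam assume g: "is_sol \<alpha> b p u gam"
    show "gam = solg \<alpha> b u p"
    proof
      fix t show "gam t = solg \<alpha> b u p t"
        by (rule phi_eq_gen[OF adm, where Bad="badset u", symmetric])
           (use g admissible_finite[OF adm] in \<open>auto simp: is_sol_def badset_def\<close>)
    qed
  qed
  then show ?thesis unfolding phi_def by simp
qed

lemma phi_eq_gen':
  fixes g :: "real \<Rightarrow> pt"
  assumes adm: "admissible umin umax u" and "continuous_on UNIV g" "g 0 = p"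
    "\<And>a c. finite (Bad \<inter> {a..c})"
    "\<And>t. t \<notin> Bad \<Longrightarrow> (g has_vector_derivative vf \<alpha> b (u t) (g t)) (at t)"
  shows "phi \<alpha> b t p u = g t"
  using phi_eq[OF adm] phi_eq_gen[OF assms] by simp

lemma phi_pos:
  assumes adm: "admissible umin umax u" and "fst p > 0"
  shows "fst (phi \<alpha> b t p u) > 0"
  using assms(2) by (simp add: phi_eq[OF adm] solg_def solX_def)

definition L1 :: "real \<Rightarrow> real \<Rightarrow> real \<Rightarrow> pt \<Rightarrow> real" where
  "L1 \<alpha> b umax p = umax * (fst p - \<alpha> * snd p) + b * snd p"

definition L2 :: "real \<Rightarrow> real \<Rightarrow> real \<Rightarrow> pt \<Rightarrow> real" where
  "L2 \<alpha> b umin p = - b * snd p - umin * (fst p - \<alpha> * snd p)"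

lemma L_mono:
  assumes adm: "admissible umin umax u" and p: "fst p > 0" and t: "0 \<le> t" and b: "b < 0"
  shows "L1 \<alpha> b umax (phi \<alpha> b t p u) \<ge> exp (b * t) * L1 \<alpha> b umax p"
    and "L2 \<alpha> b umin (phi \<alpha> b t p u) \<ge> exp (b * t) * L2 \<alpha> b umin p"
proof -
  let ?g = "solg \<alpha> b u p"
  have gc: "continuous_on UNIV ?g" using solg_is_sol[OF adm] unfolding is_sol_def by blast
  have xpos: "fst (?g s) > 0" for s using p by (simp add: solg_def solX_def)
  have bnd: "u s \<in> {umin..umax}" for s using adm unfolding admissible_def by blast
  have dx: "((\<lambda>s. fst (?g s)) has_real_derivative u s * \<alpha> * fst (?g s)) (at s)"
   and dy: "((\<lambda>s. snd (?g s)) has_real_derivative b * snd (?g s) + u s * fst (?g s)) (at s)"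
    if "s \<notin> badset u" for s
    using has_vd_fst[OF solg_deriv[OF adm]] has_vd_snd[OF solg_deriv[OF adm]] that
    by (auto simp: vf_def badset_def)
  have "exp (- b * 0) * L1 \<alpha> b umax (?g 0) \<le> exp (- b * t) * L1 \<alpha> b umax (?g t)"
  proof (rule mono_fin[OF t, of "badset u \<inter> {0..t}" _ "\<lambda>s. exp (- b * s) * (b * (u s - umax) * fst (?g s))"])
    show "finite (badset u \<inter> {0..t})" by (rule admissible_finite[OF adm])
    show "continuous_on {0..t} (\<lambda>s. exp (- b * s) * L1 \<alpha> b umax (?g s))"
      unfolding L1_def by (intro continuous_intros continuous_on_subset[OF gc]) auto
    fix s assume s: "s \<in> {0<..<t} - badset u \<inter> {0..t}"
    then have sb: "s \<notin> badset u" by auto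
    show "((\<lambda>s. exp (- b * s) * L1 \<alpha> b umax (?g s)) has_real_derivative exp (- b * s) * (b * (u s - umax) * fst (?g s))) (at s)"
      unfolding L1_def
      by (rule derivative_eq_intros dx[OF sb] dy[OF sb] refl | simp)+ (simp add: algebra_simps)
    have bb: "0 \<le> b * (u s - umax)" using b bnd[of s] by (intro mult_nonpos_nonpos) auto
    show "0 \<le> exp (- b * s) * (b * (u s - umax) * fst (?g s))"
      using mult_nonneg_nonneg[OF exp_ge_zero mult_nonneg_nonneg[OF bb less_imp_le[OF xpos[of s]]]] .
  qed
  then have "L1 \<alpha> b umax p \<le> exp (- b * t) * L1 \<alpha> b umax (?g t)"
    using solg_is_sol[OF adm] unfolding is_sol_def by simp
  then have "exp (b * t) * L1 \<alpha> b umax p \<le> exp (b * t) * (exp (- b * t) * L1 \<alpha> b umax (?g t))"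
    by (intro mult_left_mono) auto
  then show "L1 \<alpha> b umax (phi \<alpha> b t p u) \<ge> exp (b * t) * L1 \<alpha> b umax p"
    by (simp add: phi_eq[OF adm] mult.assoc[symmetric] exp_add[symmetric])
  have "exp (- b * 0) * L2 \<alpha> b umin (?g 0) \<le> exp (- b * t) * L2 \<alpha> b umin (?g t)"
  proof (rule mono_fin[OF t, of "badset u \<inter> {0..t}" _ "\<lambda>s. exp (- b * s) * (b * (umin - u s) * fst (?g s))"])
    show "finite (badset u \<inter> {0..t})" by (rule admissible_finite[OF adm])
    show "continuous_on {0..t} (\<lambda>s. exp (- b * s) * L2 \<alpha> b umin (?g s))"
      unfolding L2_def by (intro continuous_intros continuous_on_subset[OF gc]) auto
    fix s assume s: "s \<in> {0<..<t} - badset u \<inter> {0..t}"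
    then have sb: "s \<notin> badset u" by auto
    show "((\<lambda>s. exp (- b * s) * L2 \<alpha> b umin (?g s)) has_real_derivative exp (- b * s) * (b * (umin - u s) * fst (?g s))) (at s)"
      unfolding L2_def
      by (rule derivative_eq_intros dx[OF sb] dy[OF sb] refl | simp)+ (simp add: algebra_simps)
    have bb: "0 \<le> b * (umin - u s)" using b bnd[of s] by (intro mult_nonpos_nonpos) auto
    show "0 \<le> exp (- b * s) * (b * (umin - u s) * fst (?g s))"
      using mult_nonneg_nonneg[OF exp_ge_zero mult_nonneg_nonneg[OF bb less_imp_le[OF xpos[of s]]]] .
  qed
  then have "L2 \<alpha> b umin p \<le> exp (- b * t) * L2 \<alpha> b umin (?g t)"
    using solg_is_sol[OF adm] unfolding is_sol_def by simp
  then have "exp (b * t) * L2 \<alpha> b umin p \<le> exp (b * t) * (exp (- b * t) * L2 \<alpha> b umin (?g t))"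
    by (intro mult_left_mono) auto
  then show "L2 \<alpha> b umin (phi \<alpha> b t p u) \<ge> exp (b * t) * L2 \<alpha> b umin p"
    by (simp add: phi_eq[OF adm] mult.assoc[symmetric] exp_add[symmetric])
qed




definition Cset :: "real \<Rightarrow> real \<Rightarrow> real \<Rightarrow> real \<Rightarrow> pt set" where
  "Cset \<alpha> b umin umax = {p. fst p > 0 \<and> L1 \<alpha> b umax p \<ge> 0 \<and> L2 \<alpha> b umin p \<ge> 0}"

lemma C_char:
  assumes "umin < 0" "0 < umax" "b < 0"
  shows "(\<Union>u\<in>Bset \<alpha> b umin umax. ray \<alpha> b u) = Cset \<alpha> b umin umax"
proof
  show "(\<Union>u\<in>Bset \<alpha> b umin umax. ray \<alpha> b u) \<subseteq> Cset \<alpha> b umin umax"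
  proof
    fix p assume "p \<in> (\<Union>u\<in>Bset \<alpha> b umin umax. ray \<alpha> b u)"
    then obtain u where u: "umin \<le> u" "u \<le> umax" "u * \<alpha> - b > 0" and p: "fst p > 0"
      "snd p = u / (u * \<alpha> - b) * fst p"
      by (auto simp: Bset_def ray_def G_def m_slope_def)
    define d where "d = u * \<alpha> - b"
    have d: "d > 0" using u by (simp add: d_def)
    have e1: "L1 \<alpha> b umax p = fst p * (b * (u - umax)) / d"
      using d p(2) unfolding L1_def d_def by (simp add: field_simps)
    have e2: "L2 \<alpha> b umin p = fst p * (b * (umin - u)) / d"
      using d p(2) unfolding L2_def d_def by (simp add: field_simps)
    have "0 \<le> b * (u - umax)" "0 \<le> b * (umin - u)" using u assms by (auto intro: mult_nonpos_nonpos)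
    then show "p \<in> Cset \<alpha> b umin umax"
      unfolding Cset_def using e1 e2 p d by auto
  qed
next
  show "Cset \<alpha> b umin umax \<subseteq> (\<Union>u\<in>Bset \<alpha> b umin umax. ray \<alpha> b u)"
  proof
    fix p assume "p \<in> Cset \<alpha> b umin umax"
    then have x: "fst p > 0" and l1: "umax * (fst p - \<alpha> * snd p) + b * snd p \<ge> 0"
      and l2: "- b * snd p - umin * (fst p - \<alpha> * snd p) \<ge> 0"
      by (auto simp: Cset_def L1_def L2_def)
    define Q where "Q = fst p - \<alpha> * snd p"
    have "(umax - umin) * Q \<ge> 0" using l1 l2 by (simp add: Q_def algebra_simps)
    then have "Q \<ge> 0" using assms by (simp add: zero_le_mult_iff)
    moreover have "Q \<noteq> 0"
    proof
      assume "Q = 0"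
      then have "b * snd p = 0" using l1 l2 by (simp add: Q_def)
      then have "snd p = 0" using assms by simp
      then show False using \<open>Q = 0\<close> x by (simp add: Q_def)
    qed
    ultimately have Q: "Q > 0" by simp
    define u where "u = - b * snd p / Q"
    have "u \<le> umax"
    proof -
      have "- b * snd p \<le> umax * Q" using l1 by (simp add: Q_def algebra_simps)
      then show ?thesis unfolding u_def by (subst pos_divide_le_eq[OF Q]) (simp add: algebra_simps)
    qed
    moreover have "umin \<le> u"
    proof -
      have "umin * Q \<le> - b * snd p" using l2 by (simp add: Q_def algebra_simps)
      then show ?thesis unfolding u_def by (subst pos_le_divide_eq[OF Q]) (simp add: algebra_simps)
    qed
    moreover have ud: "u * \<alpha> - b = - b * fst p / Q" using Q unfolding u_def Q_def by (simp add: field_simps)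
    moreover have "- b * fst p / Q > 0" using Q x assms by (simp add: divide_neg_pos mult_neg_pos)
    moreover have "snd p = u / (u * \<alpha> - b) * fst p"
      using Q x assms unfolding ud unfolding u_def by (simp add: field_simps)
    ultimately show "p \<in> (\<Union>u\<in>Bset \<alpha> b umin umax. ray \<alpha> b u)"
      using x by (auto simp: Bset_def ray_def G_def m_slope_def intro!: bexI[of _ u])
  qed
qed

lemma closed_L: "closed {p. L1 \<alpha> b umax p \<ge> 0 \<and> L2 \<alpha> b umin p \<ge> 0}"
  unfolding L1_def L2_def by (intro closed_Collect_conj closed_Collect_le continuous_intros)

lemma clG_sub_C:
  assumes "A \<subseteq> Cset \<alpha> b umin umax"
  shows "clG A \<subseteq> Cset \<alpha> b umin umax"
proof -
  have "A \<subseteq> {p. L1 \<alpha> b umax p \<ge> 0 \<and> L2 \<alpha> b umin p \<ge> 0}" using assms by (auto simp: Cset_def)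
  then have "closure A \<subseteq> {p. L1 \<alpha> b umax p \<ge> 0 \<and> L2 \<alpha> b umin p \<ge> 0}"
    using closed_L closure_minimal by blast
  then show ?thesis unfolding clG_def G_def Cset_def by auto
qed

lemma orbit_sub_C:
  assumes "p \<in> Cset \<alpha> b umin umax" "b < 0"
  shows "orbit_plus \<alpha> b umin umax p \<subseteq> Cset \<alpha> b umin umax"
proof
  fix q assume "q \<in> orbit_plus \<alpha> b umin umax p"
  then obtain t u where q: "q = phi \<alpha> b t p u" "t \<ge> 0" "admissible umin umax u"
    unfolding orbit_plus_def by blast
  have x: "fst p > 0" "L1 \<alpha> b umax p \<ge> 0" "L2 \<alpha> b umin p \<ge> 0" using assms by (auto simp: Cset_def)
  have "L1 \<alpha> b umax q \<ge> exp (b * t) * L1 \<alpha> b umax p" "L2 \<alpha> b umin q \<ge> exp (b * t) * L2 \<alpha> b umin p"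
    using L_mono[OF q(3) x(1) q(2) assms(2)] q(1) by auto
  moreover have "exp (b * t) * L1 \<alpha> b umax p \<ge> 0" "exp (b * t) * L2 \<alpha> b umin p \<ge> 0"
    using x by auto
  moreover have "fst q > 0" using phi_pos[OF q(3) x(1)] q(1) by simp
  ultimately show "q \<in> Cset \<alpha> b umin umax" unfolding Cset_def by auto
qed

lemma clG_orbit_sub_C:
  assumes "p \<in> Cset \<alpha> b umin umax" "b < 0"
  shows "clG (orbit_plus \<alpha> b umin umax p) \<subseteq> Cset \<alpha> b umin umax"
  by (rule clG_sub_C[OF orbit_sub_C[OF assms]])

lemma not_in_cs_aux:
  fixes L :: "pt \<Rightarrow> real"
  assumes b: "b < 0" and Lc: "continuous_on UNIV L"
    and Lm: "\<And>q s v. admissible umin umax v \<Longrightarrow> fst q > 0 \<Longrightarrow> 0 \<le> s \<Longrightarrow> L (phi \<alpha> b s q v) \<ge> exp (b * s) * L q"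
    and D: "cs_prop \<alpha> b umin umax D" and d: "d \<in> D"
  shows "L d \<ge> 0"
proof (rule ccontr)
  assume neg: "\<not> L d \<ge> 0"
  have dG: "fst d > 0" using D d by (auto simp: cs_prop_def G_def)
  obtain u where u: "admissible umin umax u" "\<And>t. t \<ge> 0 \<Longrightarrow> phi \<alpha> b t d u \<in> D"
    using D d unfolding cs_prop_def by blast
  define d1 where "d1 = phi \<alpha> b 1 d u"
  have d1D: "d1 \<in> D" using u(2)[of 1] by (simp add: d1_def)
  have d1x: "fst d1 > 0" using phi_pos[OF u(1) dG] by (simp add: d1_def)
  have Ld1: "L d1 \<ge> exp b * L d" using Lm[OF u(1) dG, of 1] by (simp add: d1_def)
  define w where "w = min 0 (exp b * L d)"
  have "orbit_plus \<alpha> b umin umax d1 \<subseteq> {q. L q \<ge> w}"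
  proof
    fix q assume "q \<in> orbit_plus \<alpha> b umin umax d1"
    then obtain s v where q: "q = phi \<alpha> b s d1 v" "s \<ge> 0" "admissible umin umax v"
      unfolding orbit_plus_def by blast
    have lq: "L q \<ge> exp (b * s) * L d1" using Lm[OF q(3) d1x q(2)] q(1) by simp
    have "exp (b * s) * L d1 \<ge> w"
    proof (cases "L d1 \<ge> 0")
      case True then show ?thesis by (simp add: w_def min_le_iff_disj)
    next
      case False
      have "exp (b * s) \<le> 1" using b q(2) by (simp add: mult_nonpos_nonneg)
      then have "exp (b * s) * L d1 \<ge> 1 * L d1" using False by (intro mult_right_mono_neg) auto
      then show ?thesis using Ld1 by (simp add: w_def min_le_iff_disj)
    qed
    then show "q \<in> {q. L q \<ge> w}" using lq by simp
  qed
  moreover have "closed {q. L q \<ge> w}" using Lc by (intro closed_Collect_le continuous_intros) auto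
  ultimately have "closure (orbit_plus \<alpha> b umin umax d1) \<subseteq> {q. L q \<ge> w}"
    using closure_minimal by blast
  moreover have "d \<in> closure (orbit_plus \<alpha> b umin umax d1)"
    using D d d1D unfolding cs_prop_def clG_def by blast
  ultimately have ge: "L d \<ge> w" by blast
  have lt: "L d < exp b * L d" using neg b by (simp add: mult_less_cancel_right1)
  have "L d < w" using neg lt unfolding w_def by (simp add: min_def)
  then show False using ge by simp
qed

lemma cs_sub_C:
  assumes b: "b < 0" and D: "cs_prop \<alpha> b umin umax D"
  shows "D \<subseteq> Cset \<alpha> b umin umax"
proof
  fix d assume d: "d \<in> D"
  have "L1 \<alpha> b umax d \<ge> 0"
  proof (rule not_in_cs_aux[OF b _ _ D d])
    show "continuous_on UNIV (L1 \<alpha> b umax)" unfolding L1_def by (intro continuous_intros)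
  qed (rule L_mono(1)[OF _ _ _ b]; assumption)
  moreover have "L2 \<alpha> b umin d \<ge> 0"
  proof (rule not_in_cs_aux[OF b _ _ D d])
    show "continuous_on UNIV (L2 \<alpha> b umin)" unfolding L2_def by (intro continuous_intros)
  qed (rule L_mono(2)[OF _ _ _ b]; assumption)
  moreover have "fst d > 0" using D d by (auto simp: cs_prop_def G_def)
  ultimately show "d \<in> Cset \<alpha> b umin umax" by (simp add: Cset_def)
qed





definition K :: "real \<Rightarrow> real \<Rightarrow> real \<Rightarrow> pt \<Rightarrow> real \<Rightarrow> pt" where
  "K \<alpha> b c p t = (fst p * exp (c * \<alpha> * t),
     (snd p - m_slope \<alpha> b c * fst p) * exp (b * t) + m_slope \<alpha> b c * fst p * exp (c * \<alpha> * t))"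

lemma K_0[simp]: "K \<alpha> b c p 0 = p"
  by (simp add: K_def)

lemma K_cont: "continuous_on S (\<lambda>t. K \<alpha> b c p (t - s))"
  unfolding K_def by (intro continuous_intros)

lemma K_deriv_shift:
  assumes "c * \<alpha> - b \<noteq> 0"
  shows "((\<lambda>t. K \<alpha> b c p (t - s)) has_vector_derivative vf \<alpha> b c (K \<alpha> b c p (t - s))) (at t)"
proof -
  let ?m = "m_slope \<alpha> b c"
  have mm: "?m * (c * \<alpha>) = b * ?m + c" using assms by (simp add: m_slope_def field_simps)
  have d1: "((\<lambda>t. fst p * exp (c * \<alpha> * (t - s))) has_real_derivative c * \<alpha> * (fst p * exp (c * \<alpha> * (t - s)))) (at t)"
    by (auto intro!: derivative_eq_intros simp: algebra_simps)
  have d2: "((\<lambda>t. (snd p - ?m * fst p) * exp (b * (t - s)) + ?m * fst p * exp (c * \<alpha> * (t - s))) has_real_derivative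
      b * ((snd p - ?m * fst p) * exp (b * (t - s)) + ?m * fst p * exp (c * \<alpha> * (t - s))) + c * (fst p * exp (c * \<alpha> * (t - s)))) (at t)"
  proof -
    have "((\<lambda>t. (snd p - ?m * fst p) * exp (b * (t - s)) + ?m * fst p * exp (c * \<alpha> * (t - s))) has_real_derivative
      (snd p - ?m * fst p) * (exp (b * (t - s)) * b) + ?m * fst p * (exp (c * \<alpha> * (t - s)) * (c * \<alpha>))) (at t)"
      by (auto intro!: derivative_eq_intros)
    moreover have "(snd p - ?m * fst p) * (exp (b * (t - s)) * b) + ?m * fst p * (exp (c * \<alpha> * (t - s)) * (c * \<alpha>))
       = b * ((snd p - ?m * fst p) * exp (b * (t - s)) + ?m * fst p * exp (c * \<alpha> * (t - s))) + c * (fst p * exp (c * \<alpha> * (t - s)))"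
    proof -
      have "?m * fst p * (exp (c * \<alpha> * (t - s)) * (c * \<alpha>)) = fst p * exp (c * \<alpha> * (t - s)) * (?m * (c * \<alpha>))"
        by (simp add: algebra_simps)
      also have "\<dots> = fst p * exp (c * \<alpha> * (t - s)) * (b * ?m + c)" by (simp only: mm)
      finally show ?thesis by (simp add: algebra_simps)
    qed
    ultimately show ?thesis by simp
  qed
  have H: "((\<lambda>t. (fst p * exp (c * \<alpha> * (t - s)), (snd p - ?m * fst p) * exp (b * (t - s)) + ?m * fst p * exp (c * \<alpha> * (t - s))))
    has_vector_derivative (c * \<alpha> * (fst p * exp (c * \<alpha> * (t - s))),
      b * ((snd p - ?m * fst p) * exp (b * (t - s)) + ?m * fst p * exp (c * \<alpha> * (t - s))) + c * (fst p * exp (c * \<alpha> * (t - s))))) (at t)"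
    using has_vector_derivative_Pair[OF d1[unfolded has_real_derivative_iff_has_vector_derivative] d2[unfolded has_real_derivative_iff_has_vector_derivative]] .
  have E1: "(\<lambda>t. K \<alpha> b c p (t - s)) = (\<lambda>t. (fst p * exp (c * \<alpha> * (t - s)), (snd p - ?m * fst p) * exp (b * (t - s)) + ?m * fst p * exp (c * \<alpha> * (t - s))))"
    unfolding K_def by (rule refl)
  have E2: "vf \<alpha> b c (K \<alpha> b c p (t - s)) = (c * \<alpha> * (fst p * exp (c * \<alpha> * (t - s))),
      b * ((snd p - ?m * fst p) * exp (b * (t - s)) + ?m * fst p * exp (c * \<alpha> * (t - s))) + c * (fst p * exp (c * \<alpha> * (t - s))))"
    unfolding K_def vf_def fst_conv snd_conv by (rule refl)
  show ?thesis unfolding E1 E2 by (rule H)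
qed

lemma K_deriv:
  assumes "c * \<alpha> - b \<noteq> 0"
  shows "(K \<alpha> b c p has_vector_derivative vf \<alpha> b c (K \<alpha> b c p t)) (at t)"
  using K_deriv_shift[OF assms, of p 0] by simp

lemma two_admissible:
  assumes "c1 \<in> {umin..umax}" "u1 \<in> {umin..umax}"
  shows "admissible umin umax (\<lambda>t. if t < t1 then c1 else u1)"
  unfolding admissible_def
proof (intro conjI allI)
  show "(if t < t1 then c1 else u1) \<in> {umin..umax}" for t using assms by auto
  fix a c
  show "\<exists>S. finite S \<and> (\<forall>t\<in>{a..c} - S. loc_const (\<lambda>t. if t < t1 then c1 else u1) t)"
  proof (intro exI[of _ "{t1}"] conjI ballI)
    fix t assume "t \<in> {a..c} - {t1}"
    then have "t \<noteq> t1" by auto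
    show "loc_const (\<lambda>t. if t < t1 then c1 else u1) t"
      unfolding loc_const_def
    proof (intro exI[of _ "\<bar>t - t1\<bar>"] conjI allI impI)
      show "0 < \<bar>t - t1\<bar>" using \<open>t \<noteq> t1\<close> by simp
      fix s assume "\<bar>s - t\<bar> < \<bar>t - t1\<bar>"
      then show "(if s < t1 then c1 else u1) = (if t < t1 then c1 else u1)" by auto
    qed
  qed simp
qed

lemma const_admissible: "umin \<le> 0 \<Longrightarrow> 0 \<le> umax \<Longrightarrow> admissible umin umax (\<lambda>_. 0)"
  unfolding admissible_def loc_const_def by (auto intro!: exI[of _ "{}"] exI[of _ 1])

lemma K_cont0: "continuous_on S (K \<alpha> b c p)"
  unfolding K_def by (intro continuous_intros)

lemma phi_two:
  assumes "c1 \<in> {umin..umax}" "u1 \<in> {umin..umax}" "c1 * \<alpha> - b \<noteq> 0" "u1 * \<alpha> - b \<noteq> 0" "0 \<le> T" "0 \<le> t1"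
  shows "phi \<alpha> b (t1 + T) p (\<lambda>t. if t < t1 then c1 else u1) = K \<alpha> b u1 (K \<alpha> b c1 p t1) T"
proof -
  let ?u = "\<lambda>t. if t < t1 then c1 else u1"
  let ?p' = "K \<alpha> b c1 p t1"
  let ?g = "\<lambda>t. if t \<le> t1 then K \<alpha> b c1 p t else K \<alpha> b u1 ?p' (t - t1)"
  have "phi \<alpha> b (t1 + T) p ?u = ?g (t1 + T)"
  proof (rule phi_eq_gen'[OF two_admissible[OF assms(1,2)], where Bad="{t1}"])
    have "continuous_on ({..t1} \<union> {t1..}) ?g"
    proof (rule continuous_on_cases)
      show "closed {..t1}" by simp
      show "closed {t1..}" by simp
      show "continuous_on {..t1} (K \<alpha> b c1 p)" by (rule K_cont0)
      show "continuous_on {t1..} (\<lambda>t. K \<alpha> b u1 ?p' (t - t1))" by (rule K_cont)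
      show "\<forall>x. (x \<in> {..t1} \<and> \<not> x \<le> t1) \<or> (x \<in> {t1..} \<and> x \<le> t1) \<longrightarrow> K \<alpha> b c1 p x = K \<alpha> b u1 ?p' (x - t1)"
      proof (intro allI impI)
        fix x assume "(x \<in> {..t1} \<and> \<not> x \<le> t1) \<or> (x \<in> {t1..} \<and> x \<le> t1)"
        then have "x = t1" by auto
        then show "K \<alpha> b c1 p x = K \<alpha> b u1 ?p' (x - t1)" by simp
      qed
    qed
    moreover have "{..t1} \<union> {t1..} = (UNIV :: real set)" by auto
    ultimately show "continuous_on UNIV ?g" by simp
    show "?g 0 = p" using assms(6) by simp
    show "finite ({t1} \<inter> {a..c})" for a c by simp
    fix t assume "t \<notin> {t1}"
    then consider "t < t1" | "t > t1" by force
    then show "(?g has_vector_derivative vf \<alpha> b (?u t) (?g t)) (at t)"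
    proof cases
      case 1
      have D: "(K \<alpha> b c1 p has_vector_derivative vf \<alpha> b c1 (K \<alpha> b c1 p t)) (at t)" by (rule K_deriv[OF assms(3)])
      have "(?g has_vector_derivative vf \<alpha> b c1 (K \<alpha> b c1 p t)) (at t)"
      proof (rule has_vector_derivative_transform_within_open[OF D, where S="{..<t1}"])
        show "open {..<t1}" by simp
        show "t \<in> {..<t1}" using 1 by simp
        fix y assume "y \<in> {..<t1}"
        then show "K \<alpha> b c1 p y = ?g y" by simp
      qed
      then show ?thesis using 1 by simp
    next
      case 2
      have D: "((\<lambda>t. K \<alpha> b u1 ?p' (t - t1)) has_vector_derivative vf \<alpha> b u1 (K \<alpha> b u1 ?p' (t - t1))) (at t)"
        by (rule K_deriv_shift[OF assms(4)])
      have "(?g has_vector_derivative vf \<alpha> b u1 (K \<alpha> b u1 ?p' (t - t1))) (at t)"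
      proof (rule has_vector_derivative_transform_within_open[OF D, where S="{t1<..}"])
        show "open {t1<..}" by simp
        show "t \<in> {t1<..}" using 2 by simp
        fix y assume "y \<in> {t1<..}"
        then show "K \<alpha> b u1 ?p' (y - t1) = ?g y" by simp
      qed
      then show ?thesis using 2 by simp
    qed
  qed
  also have "?g (t1 + T) = K \<alpha> b u1 ?p' T"
  proof (cases "T = 0")
    case True then show ?thesis by simp
  next
    case False then show ?thesis using assms(5) by simp
  qed
  finally show ?thesis .
qed




lemma exists_T:
  fixes A lam e :: real
  assumes "A \<ge> 0" "lam > 0" "e > 0"
  shows "\<exists>T\<ge>0. A * exp (- lam * T) < e"
proof -
  define T where "T = max 0 (ln ((A + 1) / e) / lam)"
  have "lam * T \<ge> ln ((A + 1) / e)" using assms unfolding T_def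
    by (simp add: max_def field_simps split: if_splits)
  then have "exp (lam * T) \<ge> (A + 1) / e" using assms
    by (metis exp_le_cancel_iff exp_ln add_nonneg_pos divide_pos_pos zero_less_one)
  then have "(A + 1) / exp (lam * T) \<le> e" using assms by (simp add: divide_le_eq mult.commute)
  moreover have "A * exp (- lam * T) < (A + 1) / exp (lam * T)"
    by (simp add: exp_minus field_simps)
  moreover have "T \<ge> 0" by (simp add: T_def)
  ultimately show ?thesis using assms by (intro exI[of _ T]) auto
qed

lemma reach:
  assumes hu: "umin < 0" "0 < umax" and ha: "\<alpha> \<noteq> 0" and hb: "b < 0"
    and p: "p \<in> Cset \<alpha> b umin umax" and q: "q \<in> Cset \<alpha> b umin umax"
  shows "q \<in> clG (orbit_plus \<alpha> b umin umax p)"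
proof -
  obtain u1 where u1B: "u1 \<in> Bset \<alpha> b umin umax" and qr: "q \<in> ray \<alpha> b u1"
    using q C_char[OF hu hb, of \<alpha>] by blast
  define m1 where "m1 = m_slope \<alpha> b u1"
  define lam where "lam = u1 * \<alpha> - b"
  have u1: "u1 \<in> {umin..umax}" and lam: "lam > 0" using u1B by (auto simp: Bset_def lam_def)
  have x1: "fst q > 0" and y1: "snd q = m1 * fst q" using qr by (auto simp: ray_def G_def m1_def)
  define x0 where "x0 = fst p"
  define y0 where "y0 = snd p"
  have x0: "x0 > 0" using p by (simp add: Cset_def x0_def)
  define z0 where "z0 = y0 / x0"
  define \<delta> where "\<delta> = min umax (min (- umin) (- b / (2 * \<bar>\<alpha>\<bar>)))"
  have "b / (2 * \<bar>\<alpha>\<bar>) < 0" using hb ha by (intro divide_neg_pos) auto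
  then have d0: "\<delta> > 0" using hu by (simp add: \<delta>_def)
  have dab: "\<delta> * \<bar>\<alpha>\<bar> \<le> - b / 2"
  proof -
    have "\<delta> \<le> - b / (2 * \<bar>\<alpha>\<bar>)" by (simp add: \<delta>_def)
    moreover have "0 < 2 * \<bar>\<alpha>\<bar>" using ha by simp
    ultimately have "\<delta> * (2 * \<bar>\<alpha>\<bar>) \<le> - b" using pos_le_divide_eq[of "2 * \<bar>\<alpha>\<bar>" \<delta> "- b"] by simp
    then show ?thesis by simp
  qed
  have cgood: "c \<in> {umin..umax} \<and> c * \<alpha> - b > 0 \<and> c * \<alpha> \<noteq> 0" if "c = \<delta> \<or> c = - \<delta>" for c
  proof -
    have "\<bar>c * \<alpha>\<bar> = \<delta> * \<bar>\<alpha>\<bar>" using that d0 by (auto simp: abs_mult)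
    then have "c * \<alpha> \<ge> b / 2" using dab by linarith
    moreover have "c \<in> {umin..umax}" using that d0 by (auto simp: \<delta>_def)
    moreover have "c * \<alpha> \<noteq> 0" using that d0 ha by auto
    ultimately show ?thesis using hb by auto
  qed
  define Bd where "Bd = \<bar>z0 - m_slope \<alpha> b \<delta>\<bar> + \<bar>m_slope \<alpha> b \<delta> - m1\<bar>
      + (\<bar>z0 - m_slope \<alpha> b (- \<delta>)\<bar> + \<bar>m_slope \<alpha> b (- \<delta>) - m1\<bar>)"
  have Bd0: "Bd \<ge> 0" by (simp add: Bd_def)
  show ?thesis unfolding clG_def
  proof (rule IntI)
    show "q \<in> G" using x1 by (simp add: G_def)
    show "q \<in> closure (orbit_plus \<alpha> b umin umax p)"
      unfolding closure_approachable
    proof (intro allI impI)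
      fix e :: real assume e: "e > 0"
      obtain T where T: "T \<ge> 0" "fst q * Bd * exp (- lam * T) < e"
        using exists_T[of "fst q * Bd" lam e] x1 Bd0 lam e by auto
      define x' where "x' = fst q * exp (- (u1 * \<alpha>) * T)"
      have x'0: "x' > 0" using x1 by (simp add: x'_def)
      define Lg where "Lg = ln (x' / x0)"
      define c where "c = (if Lg * \<alpha> \<ge> 0 then \<delta> else - \<delta>)"
      have cg: "c \<in> {umin..umax}" "c * \<alpha> - b > 0" "c * \<alpha> \<noteq> 0"
        using cgood[of c] by (auto simp: c_def)
      define t1 where "t1 = Lg / (c * \<alpha>)"
      have t1: "t1 \<ge> 0"
      proof -
        have nn: "Lg * (c * \<alpha>) \<ge> 0"
        proof (cases "Lg * \<alpha> \<ge> 0")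
          case True
          have eq: "Lg * (c * \<alpha>) = \<delta> * (Lg * \<alpha>)" using True by (simp add: c_def algebra_simps)
          show ?thesis unfolding eq by (rule mult_nonneg_nonneg[OF less_imp_le[OF d0] True])
        next
          case False
          have eq: "Lg * (c * \<alpha>) = \<delta> * (- (Lg * \<alpha>))" using False by (simp add: c_def algebra_simps)
          have "0 \<le> - (Lg * \<alpha>)" using False by simp
          then show ?thesis unfolding eq by (rule mult_nonneg_nonneg[OF less_imp_le[OF d0]])
        qed
        have eq: "t1 = (Lg * (c * \<alpha>)) / ((c * \<alpha>) * (c * \<alpha>))" using cg(3) by (simp add: t1_def)
        show ?thesis unfolding eq by (rule divide_nonneg_nonneg[OF nn]) simp
      qed
      have ct1: "c * \<alpha> * t1 = Lg" using cg(3) by (simp add: t1_def)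
      define u where "u = (\<lambda>t. if t < t1 then c else u1)"
      have adm: "admissible umin umax u" unfolding u_def by (rule two_admissible[OF cg(1) u1])
      have ph: "phi \<alpha> b (t1 + T) p u = K \<alpha> b u1 (K \<alpha> b c p t1) T"
        unfolding u_def by (rule phi_two[OF cg(1) u1]) (use cg lam T t1 in \<open>auto simp: lam_def\<close>)
      define mc where "mc = m_slope \<alpha> b c"
      define y' where "y' = (y0 - mc * x0) * exp (b * t1) + mc * x0 * exp (c * \<alpha> * t1)"
      have ex: "x0 * exp (c * \<alpha> * t1) = x'" unfolding ct1 Lg_def using x0 x'0 by simp
      have p': "K \<alpha> b c p t1 = (x', y')"
        using ex by (simp add: K_def y'_def mc_def x0_def y0_def)
      have r: "K \<alpha> b u1 (x', y') T = (fst q, (y' - m1 * x') * exp (b * T) + snd q)"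
      proof -
        have "x' * exp (u1 * \<alpha> * T) = fst q"
          unfolding x'_def by (simp add: mult.assoc exp_add[symmetric])
        then show ?thesis unfolding K_def y1 m1_def[symmetric] by (simp add: algebra_simps)
      qed
      have dist_eq: "dist (phi \<alpha> b (t1 + T) p u) q = \<bar>y' - m1 * x'\<bar> * exp (b * T)"
      proof -
        have "dist (phi \<alpha> b (t1 + T) p u) q = dist (fst q, (y' - m1 * x') * exp (b * T) + snd q) (fst q, snd q)"
          using ph p' r by simp
        also have "\<dots> = \<bar>(y' - m1 * x') * exp (b * T)\<bar>" by (simp only: dist_Pair_Pair dist_real_def) simp
        finally show ?thesis by (simp add: abs_mult)
      qed
      have cmem: "c = \<delta> \<or> c = - \<delta>" by (simp add: c_def)
      have bnd: "\<bar>y' - m1 * x'\<bar> \<le> x' * Bd"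
      proof -
        have split: "y' - m1 * x' = x0 * (z0 - mc) * exp (b * t1) + (mc - m1) * x'"
          unfolding y'_def z0_def using x0 ex[symmetric] by (simp add: field_simps)
        have "exp (b * t1) \<le> exp (c * \<alpha> * t1)" using cg(2) t1 by (simp add: mult_right_mono)
        then have "\<bar>x0 * (z0 - mc) * exp (b * t1)\<bar> \<le> x0 * \<bar>z0 - mc\<bar> * exp (c * \<alpha> * t1)"
          using x0 by (simp add: abs_mult mult_left_mono)
        also have "\<dots> = \<bar>z0 - mc\<bar> * x'" using ex by (simp add: algebra_simps)
        finally have A: "\<bar>x0 * (z0 - mc) * exp (b * t1)\<bar> \<le> \<bar>z0 - mc\<bar> * x'" .
        have "\<bar>y' - m1 * x'\<bar> \<le> \<bar>x0 * (z0 - mc) * exp (b * t1)\<bar> + \<bar>(mc - m1) * x'\<bar>"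
          unfolding split by (rule abs_triangle_ineq)
        moreover have "\<bar>(mc - m1) * x'\<bar> = \<bar>mc - m1\<bar> * x'" using x'0 by (simp add: abs_mult)
        ultimately have "\<bar>y' - m1 * x'\<bar> \<le> \<bar>z0 - mc\<bar> * x' + \<bar>mc - m1\<bar> * x'" using A by linarith
        also have "\<dots> = x' * (\<bar>z0 - mc\<bar> + \<bar>mc - m1\<bar>)" by (simp add: algebra_simps)
        also have "\<dots> \<le> x' * Bd"
          using cmem x'0 unfolding Bd_def mc_def by (intro mult_left_mono) auto
        finally show ?thesis .
      qed
      have "dist (phi \<alpha> b (t1 + T) p u) q \<le> x' * Bd * exp (b * T)"
        unfolding dist_eq using bnd by (simp add: mult_right_mono)
      also have "\<dots> = fst q * Bd * exp (- lam * T)"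
        unfolding x'_def lam_def by (simp add: algebra_simps exp_add[symmetric] exp_diff)
      also have "\<dots> < e" by (rule T(2))
      finally have "dist (phi \<alpha> b (t1 + T) p u) q < e" .
      moreover have "phi \<alpha> b (t1 + T) p u \<in> orbit_plus \<alpha> b umin umax p"
        unfolding orbit_plus_def using adm t1 T(1) by (intro CollectI exI[of _ "t1 + T"] exI[of _ u]) auto
      ultimately show "\<exists>y\<in>orbit_plus \<alpha> b umin umax p. dist y q < e" by blast
    qed
  qed
qed




theorem mainTheorem10:
  fixes \<alpha> b umin umax :: real
  assumes "umin < 0" "0 < umax" "\<alpha> \<noteq> 0" "b < 0"
  defines "C \<equiv> (\<Union>u\<in>Bset \<alpha> b umin umax. ray \<alpha> b u)"
  shows "control_set \<alpha> b umin umax C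
    \<and> (\<forall>D. control_set \<alpha> b umin umax D \<longrightarrow> D = C)
    \<and> (\<forall>p\<in>C. C = clG (orbit_plus \<alpha> b umin umax p))"
proof -
  have Ceq: "C = Cset \<alpha> b umin umax" unfolding C_def by (rule C_char[OF assms(1,2,4)])
  have clo: "C = clG (orbit_plus \<alpha> b umin umax p)" if "p \<in> C" for p
  proof
    show "C \<subseteq> clG (orbit_plus \<alpha> b umin umax p)"
      using reach[OF assms(1-4)] that unfolding Ceq by blast
    show "clG (orbit_plus \<alpha> b umin umax p) \<subseteq> C"
      using clG_orbit_sub_C[OF _ assms(4)] that unfolding Ceq by blast
  qed
  have cs: "cs_prop \<alpha> b umin umax C"
    unfolding cs_prop_def
  proof (intro conjI ballI)
    show "C \<subseteq> G" unfolding Ceq by (auto simp: Cset_def G_def)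
    fix p assume p: "p \<in> C"
    have adm: "admissible umin umax (\<lambda>_. 0)" using assms by (intro const_admissible) auto
    have "\<forall>t\<ge>0. phi \<alpha> b t p (\<lambda>_. 0) \<in> C"
    proof (intro allI impI)
      fix t :: real assume "t \<ge> 0"
      then have "phi \<alpha> b t p (\<lambda>_. 0) \<in> orbit_plus \<alpha> b umin umax p"
        unfolding orbit_plus_def using adm by (intro CollectI exI[of _ t] exI[of _ "\<lambda>_. 0"]) auto
      then show "phi \<alpha> b t p (\<lambda>_. 0) \<in> C"
        using orbit_sub_C[OF _ assms(4)] p unfolding Ceq by blast
    qed
    then show "\<exists>u. admissible umin umax u \<and> (\<forall>t\<ge>0. phi \<alpha> b t p u \<in> C)" using adm by blast
    show "C \<subseteq> clG (orbit_plus \<alpha> b umin umax p)" using clo[OF p] by simp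
  qed
  have sub: "D \<subseteq> C" if "cs_prop \<alpha> b umin umax D" for D
    unfolding Ceq by (rule cs_sub_C[OF assms(4) that])
  have ctrl: "control_set \<alpha> b umin umax C"
    unfolding control_set_def using cs sub by blast
  have uniq: "D = C" if "control_set \<alpha> b umin umax D" for D
  proof -
    have "cs_prop \<alpha> b umin umax D" using that by (simp add: control_set_def)
    then have "D \<subseteq> C" by (rule sub)
    then show "D = C" using that cs unfolding control_set_def by blast
  qed
  show ?thesis using ctrl uniq clo by blast
qed


end
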